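(* Let $G=(V,E)$ be a finite simple graph of order $n$ with adjacency matrix $A$ having eigenvalues $\lambda_1\ge\cdots\ge\lambda_n$, let $k\ge1$, and let $p\in\mathbb{R}_k[x]$. Set $W(p):=\max_{u\in V}(p(A))_{uu}$ and $w(p):=\min_{u\in V}(p(A))_{uu}$. Then $$\chi_{kq}(G)\ \ge\ \frac{n}{\min\{\,|\{i : p(\lambda_i)\ge w(p)\}|,\ |\{i : p(\lambda_i)\le W(p)\}|\,\}}.$$
   Context: $\mathbb{R}_k[x]$ denotes the real polynomials of degree at most $k$. $\mathrm{dist}(v,w)$ is the graph distance in $G$, $[c]=\{1,\dots,c\}$. A quantum $k$-distance $c$-coloring of $G$ is a collection of orthogonal projectors $\{P_{v,h} : v\in V, h\in[c]\}$ in $\mathbb{C}^{d\times d}$ (for some $d\ge 1$) with $\sum_{h\in[c]}P_{v,h}=I_d$ for each $v\in V$ and $P_{v,h}P_{w,h}=0$ for all distinct $v,w$ with $\mathrm{dist}(v,w)\le k$ and all $h$. The quantum $k$-distance chromatic number $\chi_{kq}(G)$ is the smallest $c$ for which such a coloring exists for some $d>0$; equivalently it is the quantum chromatic number of the $k$-th power graph $G^k$ (same vertex set, distinct vertices adjacent iff at distance at most $k$ in $G$). *)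

theory Defs
  imports "Jordan_Normal_Form.Matrix" "Jordan_Normal_Form.Char_Poly"
begin

definition simple_graph :: "nat \<Rightarrow> (nat \<Rightarrow> nat \<Rightarrow> bool) \<Rightarrow> bool" where
  "simple_graph n E \<longleftrightarrow> (\<forall>u v. E u v \<longrightarrow> u < n \<and> v < n \<and> u \<noteq> v \<and> E v u)"

definition adj_matrix :: "nat \<Rightarrow> (nat \<Rightarrow> nat \<Rightarrow> bool) \<Rightarrow> real mat" where
  "adj_matrix n E = mat n n (\<lambda>(u,v). if E u v then 1 else 0)"

definition dist_le :: "(nat \<Rightarrow> nat \<Rightarrow> bool) \<Rightarrow> nat \<Rightarrow> nat \<Rightarrow> nat \<Rightarrow> bool" where
  "dist_le E k u v \<longleftrightarrow> (\<exists>j\<le>k. (E ^^ j) u v)"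

definition poly_mat :: "real poly \<Rightarrow> real mat \<Rightarrow> real mat" where
  "poly_mat p A = mat (dim_row A) (dim_col A)
     (\<lambda>(u,v). \<Sum>i\<le>degree p. coeff p i * (A ^\<^sub>m i) $$ (u,v))"

definition conj_transp :: "complex mat \<Rightarrow> complex mat" where
  "conj_transp P = mat (dim_col P) (dim_row P) (\<lambda>(i,j). cnj (P $$ (j,i)))"

definition orth_projector :: "nat \<Rightarrow> complex mat \<Rightarrow> bool" where
  "orth_projector d P \<longleftrightarrow> P \<in> carrier_mat d d \<and> P * P = P \<and> conj_transp P = P"

definition quantum_kdist_coloring ::
  "nat \<Rightarrow> (nat \<Rightarrow> nat \<Rightarrow> bool) \<Rightarrow> nat \<Rightarrow> nat \<Rightarrow> nat \<Rightarrow> (nat \<Rightarrow> nat \<Rightarrow> complex mat) \<Rightarrow> bool" where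
  "quantum_kdist_coloring n E k c d P \<longleftrightarrow>
     (\<forall>v<n. \<forall>h\<in>{1..c}. orth_projector d (P v h)) \<and>
     (\<forall>v<n. \<forall>i<d. \<forall>j<d. (\<Sum>h\<in>{1..c}. P v h $$ (i,j)) = (1\<^sub>m d) $$ (i,j)) \<and>
     (\<forall>v<n. \<forall>w<n. \<forall>h\<in>{1..c}. v \<noteq> w \<and> dist_le E k v w \<longrightarrow> P v h * P w h = 0\<^sub>m d d)"

definition quantum_kdist_chromatic :: "nat \<Rightarrow> (nat \<Rightarrow> nat \<Rightarrow> bool) \<Rightarrow> nat \<Rightarrow> nat" where
  "quantum_kdist_chromatic n E k =
     (LEAST c. \<exists>d>0. \<exists>P. quantum_kdist_coloring n E k c d P)"

end

theory Submission
  imports Defs "Jordan_Normal_Form.Schur_Decomposition"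
begin


lemma homog_solution:
  fixes g :: "'r \<Rightarrow> 'x \<Rightarrow> 'a::field"
  assumes fR: "finite R" and fX: "finite X" and lt: "card R < card X"
  shows "\<exists>F. (\<exists>x\<in>X. F x \<noteq> 0) \<and> (\<forall>r\<in>R. (\<Sum>x\<in>X. g r x * F x) = 0)"
proof -
  define N where "N = card X"
  define m where "m = card R"
  obtain eX where eX: "bij_betw eX {0..<N} X"
    using ex_bij_betw_nat_finite[OF fX] N_def by (metis atLeast0LessThan)
  obtain eR where eR: "bij_betw eR {0..<m} R"
    using ex_bij_betw_nat_finite[OF fR] m_def by (metis atLeast0LessThan)
  define Mt where "Mt = mat N N (\<lambda>(i,j). if i < m then g (eR i) (eX j) else (0::'a))"
  have Mt: "Mt \<in> carrier_mat N N" unfolding Mt_def by auto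
  have mN: "m < N" using lt by (simp add: m_def N_def)
  have "Mt = mat\<^sub>r N N (\<lambda>i. if i = N - 1 then 0\<^sub>v N else row Mt i)"
    by (rule eq_matI, insert mN, auto simp: Mt_def)
  hence "det Mt = 0" using det_row_0[of "N - 1" N "\<lambda>i. row Mt i"] mN Mt by auto
  then obtain v where v: "v \<in> carrier_vec N" "v \<noteq> 0\<^sub>v N" "Mt *\<^sub>v v = 0\<^sub>v N"
    using det_0_iff_vec_prod_zero_field[OF Mt] by auto
  define F where "F = (\<lambda>x. v $ (inv_into {0..<N} eX x))"
  have Finv: "F (eX j) = v $ j" if "j < N" for j
    using eX that unfolding F_def by (simp add: bij_betw_inv_into_left)
  have sumX: "(\<Sum>x\<in>X. f x) = (\<Sum>j<N. f (eX j))" for f :: "'x \<Rightarrow> 'a"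
    using sum.reindex_bij_betw[OF eX, of f] by (simp add: atLeast0LessThan)
  from v obtain j where j: "j < N" "v $ j \<noteq> 0" by (metis eq_vecI index_zero_vec(1,2) carrier_vecD)
  show ?thesis
  proof (intro exI conjI bexI ballI)
    show "F (eX j) \<noteq> 0" using Finv j by auto
    show "eX j \<in> X" using eX j by (auto simp: bij_betw_def)
    fix r assume r: "r \<in> R"
    then obtain i where i: "i < m" "eR i = r" using eR by (auto simp: bij_betw_def image_iff)
    have "(Mt *\<^sub>v v) $ i = 0" using v(3) i mN by auto
    moreover have "(Mt *\<^sub>v v) $ i = (\<Sum>j<N. g r (eX j) * v $ j)"
      using i mN v(1) by (auto simp: Mt_def scalar_prod_def row_def atLeast0LessThan intro!: sum.cong)
    ultimately show "(\<Sum>x\<in>X. g r x * F x) = 0" by (simp add: sumX Finv)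
  qed
qed



lemma mv_mult:
  fixes X Y :: "'a::comm_ring_1 mat"
  assumes X: "X \<in> carrier_mat n m" and Y: "Y \<in> carrier_mat m l" and i: "i < n"
  shows "(\<Sum>j<m. X$$(i,j) * (\<Sum>k<l. Y$$(j,k) * f k)) = (\<Sum>k<l. (X*Y)$$(i,k) * f k)"
proof -
  have "(\<Sum>k<l. (X*Y)$$(i,k) * f k) = (\<Sum>k<l. (\<Sum>j<m. X$$(i,j) * Y$$(j,k)) * f k)"
    using X Y i by (auto simp: scalar_prod_def atLeast0LessThan intro!: sum.cong)
  also have "\<dots> = (\<Sum>j<m. X$$(i,j) * (\<Sum>k<l. Y$$(j,k) * f k))"
    by (simp add: sum_distrib_left sum_distrib_right mult.assoc sum.swap[of _ "{..<l}"])
  finally show ?thesis by simp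
qed

lemma eigvec_in_L:
  fixes A :: "real mat" and q :: "nat \<Rightarrow> nat \<Rightarrow> real"
  assumes A: "A \<in> carrier_mat n n" and cp: "char_poly A = (\<Prod>l\<leftarrow>lam. [:- l, 1:])"
    and inv: "\<And>i x. i < k \<Longrightarrow> (\<Sum>u<n. q i u * x u) = 0 \<Longrightarrow>
                  (\<Sum>u<n. q i u * (\<Sum>v<n. A$$(u,v) * x v)) = 0"
    and ex: "\<exists>x. (\<forall>i<k. (\<Sum>u<n. q i u * x u) = 0) \<and> (\<exists>u<n. x u \<noteq> 0)"
  shows "\<exists>x \<mu>. (\<forall>i<k. (\<Sum>u<n. q i u * x u) = 0) \<and> (\<exists>u<n. x u \<noteq> 0) \<and>
               (\<forall>u<n. (\<Sum>v<n. A$$(u,v) * x v) = \<mu> * x u)"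
proof -
  obtain B P Q where sd: "schur_decomposition A lam = (B,P,Q)" by (cases "schur_decomposition A lam") auto
  from schur_decomposition[OF A cp sd] have sim: "similar_mat_wit A B P Q" and ut: "upper_triangular B"
    by auto
  from sim A have B: "B \<in> carrier_mat n n" and P: "P \<in> carrier_mat n n" and Q: "Q \<in> carrier_mat n n"
    and PQ: "P * Q = 1\<^sub>m n" and QP: "Q * P = 1\<^sub>m n" and APBQ: "A = P * B * Q"
    by (auto simp: similar_mat_wit_def Let_def)
  have QA: "Q * A = B * Q"
  proof -
    have "Q * A = Q * (P * B * Q)" using APBQ by simp
    also have "\<dots> = Q * (P * (B * Q))" using assoc_mult_mat[OF P B Q] by simp
    also have "\<dots> = (Q * P) * (B * Q)" using assoc_mult_mat[OF Q P, of "B*Q" n] B Q by simp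
    also have "\<dots> = B * Q" using QP B Q by simp
    finally show ?thesis .
  qed
  define inL where "inL x \<longleftrightarrow> (\<forall>i<k. (\<Sum>u<n. q i u * x u) = 0) \<and> (\<exists>u<n. x u \<noteq> 0)" for x :: "nat \<Rightarrow> real"
  define Qx where "Qx x i = (\<Sum>v<n. Q$$(i,v) * x v)" for x :: "nat \<Rightarrow> real" and i
  define J where "J = {j. \<exists>x. inL x \<and> (\<forall>i. j \<le> i \<and> i < n \<longrightarrow> Qx x i = 0)}"
  have "n \<in> J" using ex unfolding J_def inL_def by auto
  define j0 where "j0 = (LEAST j. j \<in> J)"
  have j0J: "j0 \<in> J" unfolding j0_def using \<open>n \<in> J\<close> by (rule LeastI)
  have j0min: "j \<notin> J" if "j < j0" for j using that not_less_Least unfolding j0_def by blast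
  from j0J obtain x where x: "inL x" and xz: "\<And>i. j0 \<le> i \<Longrightarrow> i < n \<Longrightarrow> Qx x i = 0"
    unfolding J_def by auto
  have recon: "x u = (\<Sum>i<n. P$$(u,i) * Qx x i)" if "u < n" for u
  proof -
    have "(\<Sum>i<n. P$$(u,i) * Qx x i) = (\<Sum>v<n. (P*Q)$$(u,v) * x v)"
      unfolding Qx_def by (rule mv_mult[OF P Q that])
    also have "\<dots> = (\<Sum>v<n. if u = v then x v else 0)"
      using that by (intro sum.cong) (auto simp: PQ)
    also have "\<dots> = x u" using that by simp
    finally show ?thesis by simp
  qed
  have j0pos: "j0 \<noteq> 0"
  proof
    assume "j0 = 0"
    hence "\<And>u. u < n \<Longrightarrow> x u = 0" using recon xz by simp
    thus False using x unfolding inL_def by auto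
  qed
  define j where "j = j0 - 1"
  have jj: "j < j0" "Suc j = j0" using j0pos unfolding j_def by auto
  define lam0 where "lam0 = B$$(j,j)"
  define z where "z u = (\<Sum>v<n. A$$(u,v) * x v) - lam0 * x u" for u
  have zL: "\<forall>i<k. (\<Sum>u<n. q i u * z u) = 0"
  proof (intro allI impI)
    fix i assume i: "i < k"
    have xi: "(\<Sum>u<n. q i u * x u) = 0" using x i unfolding inL_def by auto
    have "(\<Sum>u<n. q i u * z u) = (\<Sum>u<n. q i u * (\<Sum>v<n. A$$(u,v) * x v)) - lam0 * (\<Sum>u<n. q i u * x u)"
      unfolding z_def by (simp add: algebra_simps sum_subtractf sum_distrib_left)
    thus "(\<Sum>u<n. q i u * z u) = 0" using inv[OF i xi] xi by simp
  qed
  have Qz: "Qx z i = 0" if i: "j \<le> i" "i < n" for i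
  proof -
    have "Qx z i = (\<Sum>v<n. Q$$(i,v) * (\<Sum>w<n. A$$(v,w) * x w)) - lam0 * Qx x i"
      unfolding Qx_def z_def by (simp add: algebra_simps sum_subtractf sum_distrib_left)
    also have "(\<Sum>v<n. Q$$(i,v) * (\<Sum>w<n. A$$(v,w) * x w)) = (\<Sum>w<n. (Q*A)$$(i,w) * x w)"
      by (rule mv_mult[OF Q A i(2)])
    also have "\<dots> = (\<Sum>w<n. (B*Q)$$(i,w) * x w)" by (simp add: QA)
    also have "\<dots> = (\<Sum>l<n. B$$(i,l) * Qx x l)"
      unfolding Qx_def by (rule mv_mult[OF B Q i(2), symmetric])
    also have "\<dots> = (\<Sum>l<n. if l = i then B$$(i,i) * Qx x i else 0)"
    proof (rule sum.cong[OF refl])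
      fix l assume l: "l \<in> {..<n}"
      show "B$$(i,l) * Qx x l = (if l = i then B$$(i,i) * Qx x i else 0)"
      proof (cases "l < i")
        case True thus ?thesis using ut B i by (auto simp: upper_triangular_def)
      next
        case False
        show ?thesis using False xz[of l] l jj i by auto
      qed
    qed
    also have "\<dots> = B$$(i,i) * Qx x i" using i by (simp add: sum.delta)
    finally have "Qx z i = (B$$(i,i) - lam0) * Qx x i" by (simp add: algebra_simps)
    moreover have "(B$$(i,i) - lam0) * Qx x i = 0"
      using xz[of i] i jj unfolding lam0_def by (cases "i = j") auto
    ultimately show ?thesis by simp
  qed
  have "\<not> (\<exists>u<n. z u \<noteq> 0)"
  proof
    assume "\<exists>u<n. z u \<noteq> 0"
    hence "j \<in> J" unfolding J_def inL_def using zL Qz by blast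
    thus False using j0min[OF jj(1)] by simp
  qed
  hence "\<forall>u<n. (\<Sum>v<n. A$$(u,v) * x v) = lam0 * x u" unfolding z_def by auto
  thus ?thesis using x unfolding inL_def by blast
qed



lemma prod_linear_mset:
  fixes xs ys :: "'a::field list"
  assumes "(\<Prod>l\<leftarrow>xs. [:- l, 1:]) = (\<Prod>l\<leftarrow>ys. [:- l, 1:])"
  shows "mset xs = mset ys"
  using assms
proof (induction xs arbitrary: ys)
  case Nil
  show ?case
  proof (cases ys)
    case (Cons b ys')
    have "poly (\<Prod>l\<leftarrow>ys. [:- l, 1:]) b = 0" unfolding Cons by simp
    hence "poly (1::'a poly) b = 0" using Nil.prems by simp
    thus ?thesis by simp
  qed simp
next
  case (Cons a xs)
  have "poly (\<Prod>l\<leftarrow>ys. [:- l, 1:]) a = 0" using Cons.prems[symmetric] by simp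
  hence "a \<in> set ys" by (auto simp: poly_prod_list prod_list_zero_iff)
  hence "(\<Prod>l\<leftarrow>ys. [:- l, 1:]) = [:- a, 1:] * (\<Prod>l\<leftarrow>remove1 a ys. [:- l, 1:])"
    by (rule prod_list_map_remove1)
  with Cons.prems have "[:- a, 1:] * (\<Prod>l\<leftarrow>xs. [:- l, 1:]) = [:- a, 1:] * (\<Prod>l\<leftarrow>remove1 a ys. [:- l, 1:])"
    by simp
  hence "(\<Prod>l\<leftarrow>xs. [:- l, 1:]) = (\<Prod>l\<leftarrow>remove1 a ys. [:- l, 1:])"
    by (metis mult_left_cancel pCons_eq_0_iff one_neq_zero)
  from Cons.IH[OF this] have "mset xs = mset (remove1 a ys)" .
  thus ?case using \<open>a \<in> set ys\<close> by simp
qed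

definition orthn :: "nat \<Rightarrow> nat \<Rightarrow> (nat \<Rightarrow> nat \<Rightarrow> real) \<Rightarrow> bool" where
  "orthn n k q \<longleftrightarrow> (\<forall>i<k. \<forall>j<k. (\<Sum>u<n. q i u * q j u) = (if i = j then 1 else 0))"

definition eign :: "real mat \<Rightarrow> nat \<Rightarrow> nat \<Rightarrow> (nat \<Rightarrow> nat \<Rightarrow> real) \<Rightarrow> (nat \<Rightarrow> real) \<Rightarrow> bool" where
  "eign A n k q \<nu> \<longleftrightarrow> (\<forall>i<k. \<forall>u<n. (\<Sum>v<n. A$$(u,v) * q i v) = \<nu> i * q i u)"

lemma basis_step:
  fixes A :: "real mat"
  assumes A: "A \<in> carrier_mat n n" and sym: "\<And>u v. u < n \<Longrightarrow> v < n \<Longrightarrow> A$$(u,v) = A$$(v,u)"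
    and cp: "char_poly A = (\<Prod>l\<leftarrow>lam. [:- l, 1:])"
    and k: "k < n" and o: "orthn n k q" and e: "eign A n k q \<nu>"
  shows "\<exists>q' \<nu>'. orthn n (Suc k) q' \<and> eign A n (Suc k) q' \<nu>'"
proof -
  have "\<exists>F. (\<exists>x\<in>{..<n}. F x \<noteq> 0) \<and> (\<forall>r\<in>{..<k}. (\<Sum>x\<in>{..<n}. q r x * F x) = 0)"
    by (rule homog_solution) (use k in auto)
  hence ex: "\<exists>x. (\<forall>i<k. (\<Sum>u<n. q i u * x u) = 0) \<and> (\<exists>u<n. x u \<noteq> 0)" by auto
  have inv: "(\<Sum>u<n. q i u * (\<Sum>v<n. A$$(u,v) * x v)) = 0"
    if i: "i < k" and xi: "(\<Sum>u<n. q i u * x u) = 0" for i x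
  proof -
    have "(\<Sum>u<n. q i u * (\<Sum>v<n. A$$(u,v) * x v)) = (\<Sum>u<n. \<Sum>v<n. q i u * (A$$(u,v) * x v))"
      by (simp add: sum_distrib_left)
    also have "\<dots> = (\<Sum>v<n. \<Sum>u<n. q i u * (A$$(u,v) * x v))" by (rule sum.swap)
    also have "\<dots> = (\<Sum>v<n. (\<Sum>u<n. A$$(v,u) * q i u) * x v)"
      by (auto simp: sum_distrib_left sum_distrib_right sym mult_ac intro!: sum.cong)
    also have "\<dots> = (\<Sum>v<n. \<nu> i * q i v * x v)"
      using e i unfolding eign_def by (intro sum.cong) auto
    also have "\<dots> = \<nu> i * (\<Sum>v<n. q i v * x v)" by (simp add: sum_distrib_left mult_ac)
    finally show ?thesis using xi by simp
  qed
  obtain x \<mu> where xL: "\<forall>i<k. (\<Sum>u<n. q i u * x u) = 0" and xnz: "\<exists>u<n. x u \<noteq> 0"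
    and xe: "\<forall>u<n. (\<Sum>v<n. A$$(u,v) * x v) = \<mu> * x u"
    using eigvec_in_L[OF A cp inv ex] by blast
  define s where "s = sqrt (\<Sum>u<n. x u * x u)"
  have ss: "(\<Sum>u<n. x u * x u) > 0"
  proof -
    from xnz obtain u where u: "u < n" "x u \<noteq> 0" by auto
    have "x u * x u \<le> (\<Sum>u<n. x u * x u)"
      by (rule member_le_sum) (use u in auto)
    moreover have "x u * x u > 0" using u by (auto simp: zero_less_mult_iff linorder_neq_iff)
    ultimately show ?thesis by linarith
  qed
  hence spos: "s > 0" unfolding s_def by simp
  have s2: "s * s = (\<Sum>u<n. x u * x u)" unfolding s_def using ss by simp
  define q' where "q' = q(k := (\<lambda>u. x u / s))"
  define \<nu>' where "\<nu>' = \<nu>(k := \<mu>)"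
  have "orthn n (Suc k) q'"
    unfolding orthn_def
  proof (intro allI impI)
    fix i j assume i: "i < Suc k" and j: "j < Suc k"
    show "(\<Sum>u<n. q' i u * q' j u) = (if i = j then 1 else 0)"
    proof (cases "i = k")
      case ik: True
      show ?thesis
      proof (cases "j = k")
        case True
        have "(\<Sum>u<n. x u / s * (x u / s)) = (\<Sum>u<n. x u * x u) / (s * s)"
          by (simp add: sum_divide_distrib)
        thus ?thesis using ik True s2 ss unfolding q'_def by simp
      next
        case False
        hence "j < k" using j by simp
        hence "(\<Sum>u<n. x u / s * q j u) = (\<Sum>u<n. q j u * x u) / s"
          by (simp add: sum_divide_distrib mult_ac)
        thus ?thesis using ik False xL \<open>j < k\<close> unfolding q'_def by simp
      qed
    next
      case False
      hence ik: "i < k" using i by simp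
      show ?thesis
      proof (cases "j = k")
        case True
        have "(\<Sum>u<n. q i u * (x u / s)) = (\<Sum>u<n. q i u * x u) / s"
          by (simp add: sum_divide_distrib mult_ac)
        thus ?thesis using ik True xL unfolding q'_def by simp
      next
        case False
        hence "j < k" using j by simp
        thus ?thesis using o ik \<open>i \<noteq> k\<close> False unfolding q'_def orthn_def by simp
      qed
    qed
  qed
  moreover have "eign A n (Suc k) q' \<nu>'"
    unfolding eign_def
  proof (intro allI impI)
    fix i u assume i: "i < Suc k" and u: "u < n"
    show "(\<Sum>v<n. A$$(u,v) * q' i v) = \<nu>' i * q' i u"
    proof (cases "i = k")
      case True
      have "(\<Sum>v<n. A$$(u,v) * (x v / s)) = (\<Sum>v<n. A$$(u,v) * x v) / s"
        by (simp add: sum_divide_distrib)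
      thus ?thesis using True xe u unfolding q'_def \<nu>'_def by simp
    next
      case False
      thus ?thesis using e i u unfolding q'_def \<nu>'_def eign_def by simp
    qed
  qed
  ultimately show ?thesis by blast
qed

lemma basis_exists:
  fixes A :: "real mat"
  assumes A: "A \<in> carrier_mat n n" and sym: "\<And>u v. u < n \<Longrightarrow> v < n \<Longrightarrow> A$$(u,v) = A$$(v,u)"
    and cp: "char_poly A = (\<Prod>l\<leftarrow>lam. [:- l, 1:])"
  shows "k \<le> n \<Longrightarrow> \<exists>q \<nu>. orthn n k q \<and> eign A n k q \<nu>"
proof (induction k)
  case 0
  show ?case by (auto simp: orthn_def eign_def)
next
  case (Suc k)
  then obtain q \<nu> where "orthn n k q" "eign A n k q \<nu>" by auto
  thus ?case using basis_step[OF A sym cp] Suc.prems by auto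
qed

lemma spectral:
  fixes A :: "real mat"
  assumes A: "A \<in> carrier_mat n n" and sym: "\<And>u v. u < n \<Longrightarrow> v < n \<Longrightarrow> A$$(u,v) = A$$(v,u)"
    and cp: "char_poly A = (\<Prod>l\<leftarrow>lam. [:- l, 1:])"
  shows "\<exists>q \<nu>. eign A n n q \<nu> \<and>
     (\<forall>u<n. \<forall>v<n. (\<Sum>i<n. q i u * q i v) = (if u = v then 1 else 0)) \<and>
     mset (map \<nu> [0..<n]) = mset lam"
proof -
  obtain q \<nu> where o: "orthn n n q" and e: "eign A n n q \<nu>"
    using basis_exists[OF A sym cp, of n] by auto
  define U where "U = mat n n (\<lambda>(u,i). q i u)"
  define D where "D = mat n n (\<lambda>(i,j). if i = j then \<nu> i else 0)"
  have U: "U \<in> carrier_mat n n" and UT: "transpose_mat U \<in> carrier_mat n n" and D: "D \<in> carrier_mat n n"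
    unfolding U_def D_def by auto
  have UTU: "transpose_mat U * U = 1\<^sub>m n"
    by (rule eq_matI) (use o in \<open>auto simp: U_def orthn_def scalar_prod_def atLeast0LessThan\<close>)
  have UUT: "U * transpose_mat U = 1\<^sub>m n" by (rule mat_mult_left_right_inverse[OF UT U UTU])
  have compl: "\<forall>u<n. \<forall>v<n. (\<Sum>i<n. q i u * q i v) = (if u = v then 1 else 0)"
  proof (intro allI impI)
    fix u v assume "u < n" "v < n"
    hence "(U * transpose_mat U) $$ (u,v) = (\<Sum>i<n. q i u * q i v)"
      by (auto simp: U_def scalar_prod_def atLeast0LessThan)
    thus "(\<Sum>i<n. q i u * q i v) = (if u = v then 1 else 0)" using UUT \<open>u < n\<close> \<open>v < n\<close> by simp
  qed
  have AU: "A * U = U * D"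
  proof (rule eq_matI)
    fix u i assume u: "u < dim_row (U * D)" and i: "i < dim_col (U * D)"
    hence un: "u < n" and "i < n" using U D by auto
    have "(A * U) $$ (u,i) = (\<Sum>v<n. A$$(u,v) * q i v)"
      using A un \<open>i < n\<close> by (auto simp: U_def scalar_prod_def atLeast0LessThan intro!: sum.cong)
    also have "\<dots> = \<nu> i * q i u" using e un \<open>i < n\<close> unfolding eign_def by auto
    also have "\<dots> = (\<Sum>j<n. q j u * (if j = i then \<nu> i else 0))"
      using \<open>i < n\<close> by (simp add: if_distrib sum.delta cong: if_cong)
    also have "\<dots> = (U * D) $$ (u,i)"
      using un \<open>i < n\<close> by (auto simp: U_def D_def scalar_prod_def atLeast0LessThan intro!: sum.cong)
    finally show "(A * U) $$ (u,i) = (U * D) $$ (u,i)" .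
  qed (use A U D in auto)
  have "A = A * (U * transpose_mat U)" using UUT A by simp
  also have "\<dots> = (A * U) * transpose_mat U" using assoc_mult_mat[OF A U UT] by simp
  also have "\<dots> = U * D * transpose_mat U" using AU by simp
  finally have "similar_mat_wit A D U (transpose_mat U)"
    unfolding similar_mat_wit_def Let_def using A U UT D UTU UUT by auto
  hence "char_poly A = char_poly D" by (intro char_poly_similar) (auto simp: similar_mat_def)
  also have "\<dots> = (\<Prod>a\<leftarrow>diag_mat D. [:- a, 1:])"
    by (rule char_poly_upper_triangular[OF D]) (auto simp: D_def upper_triangular_def)
  also have "diag_mat D = map \<nu> [0..<n]" by (auto simp: diag_mat_def D_def)
  finally have "mset (map \<nu> [0..<n]) = mset lam" using cp prod_linear_mset by metis
  thus ?thesis using e compl by blast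
qed



lemma herm_entry:
  assumes "P \<in> carrier_mat d d" "conj_transp P = P" "a < d" "b < d"
  shows "cnj (P $$ (a,b)) = P $$ (b,a)"
proof -
  have "conj_transp P $$ (b,a) = cnj (P $$ (a,b))" using assms(1,3,4) by (simp add: conj_transp_def)
  thus ?thesis using assms by simp
qed

lemma inner_PP:
  fixes P1 P2 :: "complex mat"
  assumes P1: "P1 \<in> carrier_mat d d" and P2: "P2 \<in> carrier_mat d d" and H: "conj_transp P1 = P1"
  shows "(\<Sum>a<d. cnj (\<Sum>b<d. P1$$(a,b) * f b) * (\<Sum>b<d. P2$$(a,b) * g b))
       = (\<Sum>b<d. \<Sum>b'<d. cnj (f b) * g b' * (P1*P2)$$(b,b'))"
proof -
  have "(\<Sum>a<d. cnj (\<Sum>b<d. P1$$(a,b) * f b) * (\<Sum>b<d. P2$$(a,b) * g b))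
      = (\<Sum>a<d. (\<Sum>b<d. P1$$(b,a) * cnj (f b)) * (\<Sum>b'<d. P2$$(a,b') * g b'))"
    using herm_entry[OF P1 H] by (auto simp: cnj_sum intro!: sum.cong)
  also have "\<dots> = (\<Sum>a<d. \<Sum>b<d. \<Sum>b'<d. (P1$$(b,a) * cnj (f b)) * (P2$$(a,b') * g b'))"
    by (simp add: sum_product)
  also have "\<dots> = (\<Sum>b<d. \<Sum>a<d. \<Sum>b'<d. (P1$$(b,a) * cnj (f b)) * (P2$$(a,b') * g b'))"
    by (rule sum.swap)
  also have "\<dots> = (\<Sum>b<d. \<Sum>b'<d. \<Sum>a<d. (P1$$(b,a) * cnj (f b)) * (P2$$(a,b') * g b'))"
    by (rule sum.cong[OF refl], rule sum.swap)
  also have "\<dots> = (\<Sum>b<d. \<Sum>b'<d. cnj (f b) * g b' * (P1*P2)$$(b,b'))"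
  proof (intro sum.cong refl)
    fix b b' assume "b \<in> {..<d}" "b' \<in> {..<d}"
    hence "(P1*P2)$$(b,b') = (\<Sum>a<d. P1$$(b,a) * P2$$(a,b'))"
      using P1 P2 by (auto simp: scalar_prod_def atLeast0LessThan)
    thus "(\<Sum>a<d. (P1$$(b,a) * cnj (f b)) * (P2$$(a,b') * g b')) = cnj (f b) * g b' * (P1*P2)$$(b,b')"
      by (simp add: sum_distrib_left mult_ac)
  qed
  finally show ?thesis .
qed

lemma pinch:
  fixes K :: "nat \<Rightarrow> nat \<Rightarrow> complex" and F :: "nat \<Rightarrow> nat \<Rightarrow> complex"
  assumes col: "quantum_kdist_coloring n E k c d P"
    and supp: "\<And>u v. u < n \<Longrightarrow> v < n \<Longrightarrow> u \<noteq> v \<Longrightarrow> K u v \<noteq> 0 \<Longrightarrow> dist_le E k u v"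
  defines "G \<equiv> (\<lambda>h u a. \<Sum>b<d. P u h $$ (a,b) * F u b)"
  shows "(\<Sum>h\<in>{1..c}. \<Sum>a<d. \<Sum>u<n. \<Sum>v<n. K u v * (cnj (G h u a) * G h v a))
       = (\<Sum>u<n. K u u * (\<Sum>b<d. cnj (F u b) * F u b))"
proof -
  have orth: "\<And>v h. v < n \<Longrightarrow> h \<in> {1..c} \<Longrightarrow> orth_projector d (P v h)"
    and sumI: "\<And>v i j. v < n \<Longrightarrow> i < d \<Longrightarrow> j < d \<Longrightarrow> (\<Sum>h\<in>{1..c}. P v h $$ (i,j)) = (1\<^sub>m d) $$ (i,j)"
    and ortho: "\<And>v w h. v < n \<Longrightarrow> w < n \<Longrightarrow> h \<in> {1..c} \<Longrightarrow> v \<noteq> w \<Longrightarrow> dist_le E k v w \<Longrightarrow> P v h * P w h = 0\<^sub>m d d"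
    using col unfolding quantum_kdist_coloring_def by blast+
  define X where "X h u = (\<Sum>b<d. \<Sum>b'<d. cnj (F u b) * F u b' * P u h $$ (b,b'))" for h u
  have step1: "(\<Sum>a<d. K u v * (cnj (G h u a) * G h v a)) = (if u = v then K u u * X h u else 0)"
    if h: "h \<in> {1..c}" and u: "u < n" and v: "v < n" for h u v
  proof -
    have Pu: "P u h \<in> carrier_mat d d" "conj_transp (P u h) = P u h" "P u h * P u h = P u h"
      using orth[OF u h] unfolding orth_projector_def by auto
    have Pv: "P v h \<in> carrier_mat d d"
      using orth[OF v h] unfolding orth_projector_def by auto
    have "(\<Sum>a<d. K u v * (cnj (G h u a) * G h v a)) = K u v * (\<Sum>a<d. cnj (G h u a) * G h v a)"
      by (simp add: sum_distrib_left)
    also have "(\<Sum>a<d. cnj (G h u a) * G h v a) = (\<Sum>b<d. \<Sum>b'<d. cnj (F u b) * F v b' * (P u h * P v h)$$(b,b'))"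
      unfolding G_def by (rule inner_PP[OF Pu(1) Pv Pu(2)])
    finally have eq: "(\<Sum>a<d. K u v * (cnj (G h u a) * G h v a)) = K u v * (\<Sum>b<d. \<Sum>b'<d. cnj (F u b) * F v b' * (P u h * P v h)$$(b,b'))" .
    show ?thesis
    proof (cases "u = v")
      case True
      thus ?thesis using eq Pu(3) unfolding X_def by simp
    next
      case False
      show ?thesis
      proof (cases "K u v = 0")
        case True thus ?thesis using eq False by simp
      next
        case Knz: False
        have "P u h * P v h = 0\<^sub>m d d" using ortho[OF u v h False supp[OF u v False Knz]] .
        hence "(\<Sum>b<d. \<Sum>b'<d. cnj (F u b) * F v b' * (P u h * P v h)$$(b,b')) = 0" by simp
        thus ?thesis using eq False by simp
      qed
    qed
  qed
  have "(\<Sum>h\<in>{1..c}. \<Sum>a<d. \<Sum>u<n. \<Sum>v<n. K u v * (cnj (G h u a) * G h v a))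
      = (\<Sum>h\<in>{1..c}. \<Sum>u<n. \<Sum>a<d. \<Sum>v<n. K u v * (cnj (G h u a) * G h v a))"
    by (rule sum.cong[OF refl], rule sum.swap)
  also have "\<dots> = (\<Sum>h\<in>{1..c}. \<Sum>u<n. \<Sum>v<n. \<Sum>a<d. K u v * (cnj (G h u a) * G h v a))"
    by (rule sum.cong[OF refl], rule sum.cong[OF refl], rule sum.swap)
  also have "\<dots> = (\<Sum>h\<in>{1..c}. \<Sum>u<n. \<Sum>v<n. if u = v then K u u * X h u else 0)"
    by (intro sum.cong refl step1) auto
  also have "\<dots> = (\<Sum>h\<in>{1..c}. \<Sum>u<n. K u u * X h u)"
    by (intro sum.cong refl) (simp add: sum.delta)
  also have "\<dots> = (\<Sum>u<n. \<Sum>h\<in>{1..c}. K u u * X h u)" by (rule sum.swap)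
  also have "\<dots> = (\<Sum>u<n. K u u * (\<Sum>b<d. cnj (F u b) * F u b))"
  proof (rule sum.cong[OF refl])
    fix u assume u: "u \<in> {..<n}"
    have "(\<Sum>h\<in>{1..c}. X h u) = (\<Sum>b<d. \<Sum>b'<d. \<Sum>h\<in>{1..c}. cnj (F u b) * F u b' * P u h $$ (b,b'))"
      unfolding X_def
      by (subst sum.swap, rule sum.cong[OF refl], rule sum.swap)
    also have "\<dots> = (\<Sum>b<d. \<Sum>b'<d. cnj (F u b) * F u b' * (1\<^sub>m d) $$ (b,b'))"
      using sumI u by (simp add: sum_distrib_left[symmetric])
    also have "\<dots> = (\<Sum>b<d. cnj (F u b) * F u b)"
      by (intro sum.cong refl) (simp add: if_distrib sum.delta cong: if_cong)
    finally show "(\<Sum>h\<in>{1..c}. K u u * X h u) = K u u * (\<Sum>b<d. cnj (F u b) * F u b)"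
      by (simp add: sum_distrib_left[symmetric])
  qed
  finally show ?thesis .
qed

lemma spec_form:
  fixes q :: "nat \<Rightarrow> nat \<Rightarrow> real" and \<mu> :: "nat \<Rightarrow> real" and g :: "nat \<Rightarrow> complex"
  shows "(\<Sum>u<n. \<Sum>v<n. of_real (\<Sum>i<n. \<mu> i * q i u * q i v) * (cnj (g u) * g v))
       = (\<Sum>i<n. of_real (\<mu> i) * (cnj (\<Sum>u<n. of_real (q i u) * g u) * (\<Sum>u<n. of_real (q i u) * g u)))"
proof -
  have "(\<Sum>u<n. \<Sum>v<n. of_real (\<Sum>i<n. \<mu> i * q i u * q i v) * (cnj (g u) * g v))
      = (\<Sum>u<n. \<Sum>v<n. \<Sum>i<n. of_real (\<mu> i) * ((of_real (q i u) * cnj (g u)) * (of_real (q i v) * g v)))"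
    by (simp add: sum_distrib_left sum_distrib_right mult_ac)
  also have "\<dots> = (\<Sum>u<n. \<Sum>i<n. \<Sum>v<n. of_real (\<mu> i) * ((of_real (q i u) * cnj (g u)) * (of_real (q i v) * g v)))"
    by (rule sum.cong[OF refl], rule sum.swap)
  also have "\<dots> = (\<Sum>i<n. \<Sum>u<n. \<Sum>v<n. of_real (\<mu> i) * ((of_real (q i u) * cnj (g u)) * (of_real (q i v) * g v)))"
    by (rule sum.swap)
  also have "\<dots> = (\<Sum>i<n. of_real (\<mu> i) * ((\<Sum>u<n. of_real (q i u) * cnj (g u)) * (\<Sum>v<n. of_real (q i v) * g v)))"
    by (intro sum.cong refl, subst sum_product, simp only: sum_distrib_left)
  also have "\<dots> = (\<Sum>i<n. of_real (\<mu> i) * (cnj (\<Sum>u<n. of_real (q i u) * g u) * (\<Sum>u<n. of_real (q i u) * g u)))"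
    by (simp add: cnj_sum)
  finally show ?thesis .
qed

lemma all_zero_of_sum:
  fixes f :: "'b \<Rightarrow> real"
  assumes "finite A" "\<And>x. x \<in> A \<Longrightarrow> f x \<le> 0" "sum f A \<ge> 0"
  shows "\<forall>x\<in>A. f x = 0"
proof -
  have "sum (\<lambda>x. - f x) A = 0" using assms(3) sum_nonpos[of A f] assms(2)
    by (simp add: sum_negf)
  hence "\<forall>x\<in>A. - f x = 0" using sum_nonneg_eq_0_iff[OF assms(1), of "\<lambda>x. - f x"] assms(2) by force
  thus ?thesis by simp
qed

lemma cnj_mult_self: "cnj z * z = complex_of_real ((cmod z)^2)"
  using complex_norm_square[of z] by (simp add: mult.commute)

lemma main_bound:
  fixes M :: "nat \<Rightarrow> nat \<Rightarrow> real" and q :: "nat \<Rightarrow> nat \<Rightarrow> real" and \<mu> :: "nat \<Rightarrow> real"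
  assumes compl: "\<And>u v. u < n \<Longrightarrow> v < n \<Longrightarrow> (\<Sum>i<n. q i u * q i v) = (if u = v then 1 else 0)"
    and Mdec: "\<And>u v. u < n \<Longrightarrow> v < n \<Longrightarrow> M u v = (\<Sum>i<n. \<mu> i * q i u * q i v)"
    and supp: "\<And>u v. u < n \<Longrightarrow> v < n \<Longrightarrow> u \<noteq> v \<Longrightarrow> M u v \<noteq> 0 \<Longrightarrow> dist_le E k u v"
    and diag: "\<And>u. u < n \<Longrightarrow> t \<le> M u u"
    and col: "quantum_kdist_coloring n E k c d P" and d: "d > 0"
  shows "n \<le> c * card {i. i < n \<and> t \<le> \<mu> i}"
proof (rule ccontr)
  define S where "S = {i. i < n \<and> t \<le> \<mu> i}"
  define m where "m = card S"
  assume "\<not> n \<le> c * card {i. i < n \<and> t \<le> \<mu> i}"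
  hence lt: "c * m < n" unfolding m_def S_def by simp
  have fS: "finite S" unfolding S_def by auto
  define R where "R = {1..c} \<times> {..<d} \<times> S"
  define X where "X = {..<n} \<times> {..<d}"
  have cR: "card R = c * (d * m)" unfolding R_def m_def by (simp add: card_cartesian_product)
  have cX: "card X = n * d" unfolding X_def by (simp add: card_cartesian_product)
  have "c * (d * m) < n * d" using lt d by (metis mult.assoc mult.commute mult_less_mono1)
  hence cRX: "card R < card X" using cR cX by simp
  define g where "g r x = (case r of (h,a,i) \<Rightarrow> case x of (u,b) \<Rightarrow> of_real (q i u) * P u h $$ (a,b))"
    for r :: "nat \<times> nat \<times> nat" and x :: "nat \<times> nat"
  obtain Ff where Fnz: "\<exists>x\<in>X. Ff x \<noteq> (0::complex)" and Fc: "\<forall>r\<in>R. (\<Sum>x\<in>X. g r x * Ff x) = 0"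
    using homog_solution[of R X g] cRX fS unfolding R_def X_def by auto
  define F where "F u b = Ff (u,b)" for u b
  define G where "G = (\<lambda>h u a. \<Sum>b<d. P u h $$ (a,b) * F u b)"
  define cc where "cc h a i = (\<Sum>u<n. of_real (q i u) * G h u a)" for h a i
  have ccS: "cc h a i = 0" if h: "h \<in> {1..c}" and a: "a < d" and i: "i \<in> S" for h a i
  proof -
    have "(h,a,i) \<in> R" using h a i unfolding R_def by auto
    hence "0 = (\<Sum>x\<in>X. g (h,a,i) x * Ff x)" using Fc by auto
    also have "\<dots> = (\<Sum>u<n. \<Sum>b<d. of_real (q i u) * P u h $$ (a,b) * F u b)"
      unfolding X_def g_def F_def by (simp add: sum.cartesian_product case_prod_unfold)
    also have "\<dots> = cc h a i"
      unfolding cc_def G_def by (simp add: sum_distrib_left mult_ac)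
    finally show ?thesis by simp
  qed
  define K where "K u v = complex_of_real (M u v - (if u = v then t else 0))" for u v
  have Kdec: "K u v = of_real (\<Sum>i<n. (\<mu> i - t) * q i u * q i v)" if "u < n" "v < n" for u v
  proof -
    have "(\<Sum>i<n. (\<mu> i - t) * q i u * q i v) = (\<Sum>i<n. \<mu> i * q i u * q i v) - t * (\<Sum>i<n. q i u * q i v)"
      by (simp add: algebra_simps sum_subtractf sum_distrib_left)
    thus ?thesis using that Mdec compl unfolding K_def by simp
  qed
  have Ksupp: "dist_le E k u v" if "u < n" "v < n" "u \<noteq> v" "K u v \<noteq> 0" for u v
    using supp[OF that(1-3)] that unfolding K_def by simp
  define T where "T = (\<Sum>h\<in>{1..c}. \<Sum>a<d. \<Sum>u<n. \<Sum>v<n. K u v * (cnj (G h u a) * G h v a))"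
  have "T = (\<Sum>u<n. K u u * (\<Sum>b<d. cnj (F u b) * F u b))"
    unfolding T_def G_def by (rule pinch[OF col Ksupp])
  also have "\<dots> = of_real (\<Sum>u<n. (M u u - t) * (\<Sum>b<d. (cmod (F u b))^2))"
    by (simp add: K_def cnj_mult_self)
  finally have T1: "Re T = (\<Sum>u<n. (M u u - t) * (\<Sum>b<d. (cmod (F u b))^2))" by simp
  have Tnn: "Re T \<ge> 0" unfolding T1 using diag by (intro sum_nonneg mult_nonneg_nonneg sum_nonneg) auto
  define trm where "trm h a i = (\<mu> i - t) * (cmod (cc h a i))^2" for h a i
  have "T = (\<Sum>h\<in>{1..c}. \<Sum>a<d. \<Sum>i<n. of_real (\<mu> i - t) * (cnj (cc h a i) * cc h a i))"
    unfolding T_def cc_def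
  proof (rule sum.cong[OF refl], rule sum.cong[OF refl])
    fix h a
    have "(\<Sum>u<n. \<Sum>v<n. K u v * (cnj (G h u a) * G h v a))
        = (\<Sum>u<n. \<Sum>v<n. of_real (\<Sum>i<n. (\<mu> i - t) * q i u * q i v) * (cnj (G h u a) * G h v a))"
      by (intro sum.cong refl) (simp add: Kdec)
    also have "\<dots> = (\<Sum>i<n. of_real (\<mu> i - t) * (cnj (\<Sum>u<n. of_real (q i u) * G h u a) * (\<Sum>u<n. of_real (q i u) * G h u a)))"
      by (rule spec_form)
    finally show "(\<Sum>u<n. \<Sum>v<n. K u v * (cnj (G h u a) * G h v a)) = (\<Sum>i<n. of_real (\<mu> i - t) * (cnj (\<Sum>u<n. of_real (q i u) * G h u a) * (\<Sum>u<n. of_real (q i u) * G h u a)))" .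
  qed
  hence T2: "Re T = (\<Sum>h\<in>{1..c}. \<Sum>a<d. \<Sum>i<n. trm h a i)"
    unfolding trm_def by (simp add: cnj_mult_self)
  have trmnp: "trm h a i \<le> 0" if "h \<in> {1..c}" "a < d" "i < n" for h a i
  proof (cases "i \<in> S")
    case True thus ?thesis using ccS that unfolding trm_def by simp
  next
    case False
    hence "\<mu> i - t < 0" using that unfolding S_def by auto
    thus ?thesis unfolding trm_def by (simp add: mult_nonpos_nonneg)
  qed
  have z1: "\<forall>h\<in>{1..c}. (\<Sum>a<d. \<Sum>i<n. trm h a i) = 0"
    by (rule all_zero_of_sum) (use Tnn T2 trmnp in \<open>auto intro!: sum_nonpos\<close>)
  have z3: "trm h a i = 0" if h: "h \<in> {1..c}" and a: "a < d" and i: "i < n" for h a i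
  proof -
    have "\<forall>a\<in>{..<d}. (\<Sum>i<n. trm h a i) = 0"
      by (rule all_zero_of_sum) (use z1 h trmnp in \<open>auto intro!: sum_nonpos\<close>)
    hence "\<forall>i\<in>{..<n}. trm h a i = 0"
      by (intro all_zero_of_sum) (use a h trmnp in auto)
    thus ?thesis using i by auto
  qed
  have cc0: "cc h a i = 0" if h: "h \<in> {1..c}" and a: "a < d" and i: "i < n" for h a i
  proof (cases "i \<in> S")
    case True thus ?thesis using ccS h a by auto
  next
    case False
    hence "\<mu> i - t \<noteq> 0" using i unfolding S_def by auto
    thus ?thesis using z3[OF h a i] unfolding trm_def by simp
  qed
  have G0: "G h u a = 0" if h: "h \<in> {1..c}" and a: "a < d" and u: "u < n" for h a u
  proof -
    have "(\<Sum>i<n. of_real (q i u) * cc h a i) = (\<Sum>i<n. \<Sum>v<n. of_real (q i u * q i v) * G h v a)"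
      unfolding cc_def by (simp add: sum_distrib_left mult_ac)
    also have "\<dots> = (\<Sum>v<n. \<Sum>i<n. of_real (q i u * q i v) * G h v a)" by (rule sum.swap)
    also have "\<dots> = (\<Sum>v<n. of_real (\<Sum>i<n. q i u * q i v) * G h v a)"
      by (simp add: sum_distrib_right)
    also have "\<dots> = (\<Sum>v<n. if u = v then G h v a else 0)"
      using u compl by (intro sum.cong refl) auto
    also have "\<dots> = G h u a" using u by simp
    finally show ?thesis using cc0 h a by simp
  qed
  have F0: "F u b = 0" if u: "u < n" and b: "b < d" for u b
  proof -
    have "(\<Sum>h\<in>{1..c}. G h u b) = (\<Sum>b'<d. (\<Sum>h\<in>{1..c}. P u h $$ (b,b')) * F u b')"
      unfolding G_def by (subst sum.swap) (simp add: sum_distrib_right)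
    also have "\<dots> = (\<Sum>b'<d. (if b = b' then F u b' else 0))"
      using col u b unfolding quantum_kdist_coloring_def by (intro sum.cong refl) auto
    also have "\<dots> = F u b" using b by simp
    moreover have "(\<Sum>h\<in>{1..c}. G h u b) = 0" using G0 u b by simp
    ultimately show ?thesis by simp
  qed
  from Fnz obtain u b where "u < n" "b < d" "Ff (u,b) \<noteq> 0" unfolding X_def by auto
  thus False using F0 unfolding F_def by auto
qed



lemma adj_carrier: "adj_matrix n E \<in> carrier_mat n n" by (simp add: adj_matrix_def)

lemma adj_entry: "u < n \<Longrightarrow> v < n \<Longrightarrow> adj_matrix n E $$ (u,v) = (if E u v then 1 else 0)"
  by (simp add: adj_matrix_def)

lemma adj_sym: assumes "simple_graph n E" "u < n" "v < n"
  shows "adj_matrix n E $$ (u,v) = adj_matrix n E $$ (v,u)"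
  using assms by (auto simp: adj_entry simple_graph_def)

lemma pow_Suc_entry:
  assumes A: "A \<in> carrier_mat n n" and u: "u < n" and v: "v < n"
  shows "(A ^\<^sub>m Suc j) $$ (u,v) = (\<Sum>w<n. (A ^\<^sub>m j) $$ (u,w) * A $$ (w,v))"
proof -
  have P: "A ^\<^sub>m j \<in> carrier_mat n n" using A by simp
  show ?thesis using A P u v by (auto simp: scalar_prod_def atLeast0LessThan intro!: sum.cong)
qed

lemma pow_supp:
  assumes "u < n" "v < n" "(adj_matrix n E ^\<^sub>m j) $$ (u,v) \<noteq> 0"
  shows "(E ^^ j) u v"
  using assms(2,3)
proof (induction j arbitrary: v)
  case 0
  thus ?case using assms(1) by (auto simp: adj_matrix_def split: if_splits)
next
  case (Suc j)
  let ?A = "adj_matrix n E"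
  have "(?A ^\<^sub>m Suc j) $$ (u,v) = (\<Sum>w<n. (?A ^\<^sub>m j) $$ (u,w) * ?A $$ (w,v))"
    by (rule pow_Suc_entry[OF adj_carrier assms(1) Suc.prems(1)])
  with Suc.prems(2) obtain w where w: "w < n" "(?A ^\<^sub>m j) $$ (u,w) * ?A $$ (w,v) \<noteq> 0"
    by (metis (no_types, lifting) lessThan_iff sum.neutral)
  hence "(E ^^ j) u w" "E w v" using Suc.IH[of w] Suc.prems(1) by (auto simp: adj_entry split: if_splits)
  thus ?case by (rule relpowp_Suc_I)
qed

lemma pow_eig:
  fixes A :: "real mat"
  assumes A: "A \<in> carrier_mat n n" and sym: "\<And>u v. u < n \<Longrightarrow> v < n \<Longrightarrow> A$$(u,v) = A$$(v,u)"
    and e: "eign A n n q \<nu>"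
    and compl: "\<And>u v. u < n \<Longrightarrow> v < n \<Longrightarrow> (\<Sum>i<n. q i u * q i v) = (if u = v then 1 else 0)"
    and u: "u < n" and v: "v < n"
  shows "(A ^\<^sub>m j) $$ (u,v) = (\<Sum>i<n. \<nu> i ^ j * q i u * q i v)"
  using v
proof (induction j arbitrary: v)
  case 0
  thus ?case using A u compl by simp
next
  case (Suc j)
  have "(A ^\<^sub>m Suc j) $$ (u,v) = (\<Sum>w<n. (A ^\<^sub>m j) $$ (u,w) * A $$ (w,v))"
    by (rule pow_Suc_entry[OF A u Suc.prems(1)])
  also have "\<dots> = (\<Sum>w<n. (\<Sum>i<n. \<nu> i ^ j * q i u * q i w) * A $$ (w,v))"
    using Suc.IH by auto
  also have "\<dots> = (\<Sum>w<n. (\<Sum>i<n. \<nu> i ^ j * q i u * q i w) * A $$ (v,w))"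
    using sym Suc.prems by (intro sum.cong refl) auto
  also have "\<dots> = (\<Sum>w<n. \<Sum>i<n. \<nu> i ^ j * q i u * (A $$ (v,w) * q i w))"
    by (simp add: sum_distrib_left sum_distrib_right mult_ac)
  also have "\<dots> = (\<Sum>i<n. \<Sum>w<n. \<nu> i ^ j * q i u * (A $$ (v,w) * q i w))" by (rule sum.swap)
  also have "\<dots> = (\<Sum>i<n. \<nu> i ^ j * q i u * (\<Sum>w<n. A $$ (v,w) * q i w))"
    by (simp add: sum_distrib_left)
  also have "\<dots> = (\<Sum>i<n. \<nu> i ^ j * q i u * (\<nu> i * q i v))"
    using e Suc.prems unfolding eign_def by auto
  also have "\<dots> = (\<Sum>i<n. \<nu> i ^ Suc j * q i u * q i v)" by (simp add: mult_ac)
  finally show ?case .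
qed

lemma poly_mat_entry:
  assumes A: "A \<in> carrier_mat n n" and u: "u < n" and v: "v < n"
  shows "poly_mat p A $$ (u,v) = (\<Sum>j\<le>degree p. coeff p j * (A ^\<^sub>m j) $$ (u,v))"
  using A u v by (simp add: poly_mat_def)

lemma classical_col:
  "quantum_kdist_coloring n E k n 1 (\<lambda>v h. if h = Suc v then 1\<^sub>m 1 else 0\<^sub>m 1 1)"
proof -
  have o1: "orth_projector 1 (1\<^sub>m 1 :: complex mat)"
    unfolding orth_projector_def conj_transp_def by (auto intro!: eq_matI)
  have o0: "orth_projector 1 (0\<^sub>m 1 1 :: complex mat)"
    unfolding orth_projector_def conj_transp_def by (auto intro!: eq_matI)
  show ?thesis
    unfolding quantum_kdist_coloring_def
  proof (intro conjI allI impI ballI)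
    fix v h assume "v < n" "h \<in> {1..n}"
    show "orth_projector 1 (if h = Suc v then 1\<^sub>m 1 else 0\<^sub>m 1 1)" using o1 o0 by auto
  next
    fix v i j :: nat assume v: "v < n" and i: "i < 1" and j: "j < 1"
    have "(\<Sum>h\<in>{1..n}. (if h = Suc v then 1\<^sub>m 1 else 0\<^sub>m 1 1 :: complex mat) $$ (i,j))
        = (\<Sum>h\<in>{1..n}. if h = Suc v then 1 else 0)"
      using i j by (intro sum.cong) auto
    also have "\<dots> = 1" using v by simp
    finally show "(\<Sum>h\<in>{1..n}. (if h = Suc v then 1\<^sub>m 1 else 0\<^sub>m 1 1 :: complex mat) $$ (i,j)) = 1\<^sub>m 1 $$ (i,j)"
      using i j by simp
  next
    fix v w h assume "v < n" "w < n" "h \<in> {1..n}" and vw: "v \<noteq> w \<and> dist_le E k v w"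
    show "(if h = Suc v then 1\<^sub>m 1 else 0\<^sub>m 1 1 :: complex mat) * (if h = Suc w then 1\<^sub>m 1 else 0\<^sub>m 1 1) = 0\<^sub>m 1 1"
      using vw by auto
  qed
qed

lemma card_mset_eq:
  assumes "mset (map \<nu> [0..<n]) = mset lam"
  shows "card {i. i < n \<and> Q (lam ! i)} = card {i. i < n \<and> Q (\<nu> i)}"
proof -
  have ln: "length lam = n" using assms by (metis length_map length_upt minus_nat.diff_0 size_mset)
  have "card {i. i < n \<and> Q (lam ! i)} = length (filter Q lam)"
    using ln by (simp add: length_filter_conv_card)
  also have "\<dots> = size (filter_mset Q (mset lam))" by (metis mset_filter size_mset)
  also have "\<dots> = size (filter_mset Q (mset (map \<nu> [0..<n])))" using assms by simp
  also have "\<dots> = length (filter Q (map \<nu> [0..<n]))" by (metis mset_filter size_mset)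
  also have "\<dots> = card {i. i < n \<and> Q (map \<nu> [0..<n] ! i)}" by (simp add: length_filter_conv_card)
  also have "\<dots> = card {i. i < n \<and> Q (\<nu> i)}" by (intro arg_cong[where f = card]) auto
  finally show ?thesis .
qed



theorem theorem4p1:
  fixes n k :: nat and E :: "nat \<Rightarrow> nat \<Rightarrow> bool" and p :: "real poly"
    and lam :: "real list"
  assumes "simple_graph n E"
    and "k \<ge> 1"
    and "degree p \<le> k"
    and "length lam = n" and "sorted_wrt (\<ge>) lam"
    and "char_poly (adj_matrix n E) = (\<Prod>l\<leftarrow>lam. [:- l, 1:])"
  shows "let A = adj_matrix n E;
             W = Max ((\<lambda>u. poly_mat p A $$ (u,u)) ` {0..<n});
             w = Min ((\<lambda>u. poly_mat p A $$ (u,u)) ` {0..<n})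
         in real (quantum_kdist_chromatic n E k) \<ge>
            real n / real (min (card {i. i < n \<and> poly p (lam ! i) \<ge> w})
                                (card {i. i < n \<and> poly p (lam ! i) \<le> W}))"
proof -
  note sg = assms(1) and degk = assms(3) and cp = assms(6)
  define A where "A = adj_matrix n E"
  define M where "M u v = poly_mat p A $$ (u,v)" for u v
  define W where "W = Max ((\<lambda>u. poly_mat p A $$ (u,u)) ` {0..<n})"
  define w where "w = Min ((\<lambda>u. poly_mat p A $$ (u,u)) ` {0..<n})"
  define \<chi> where "\<chi> = quantum_kdist_chromatic n E k"
  define m1 where "m1 = card {i. i < n \<and> poly p (lam ! i) \<ge> w}"
  define m2 where "m2 = card {i. i < n \<and> poly p (lam ! i) \<le> W}"
  have Ac: "A \<in> carrier_mat n n" unfolding A_def by (rule adj_carrier)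
  have sym: "\<And>u v. u < n \<Longrightarrow> v < n \<Longrightarrow> A$$(u,v) = A$$(v,u)"
    unfolding A_def using adj_sym[OF sg] by blast
  have cpA: "char_poly A = (\<Prod>l\<leftarrow>lam. [:- l, 1:])" unfolding A_def by (rule cp)
  obtain q \<nu> where e: "eign A n n q \<nu>"
    and compl: "\<forall>u<n. \<forall>v<n. (\<Sum>i<n. q i u * q i v) = (if u = v then 1 else 0)"
    and ms: "mset (map \<nu> [0..<n]) = mset lam"
    using spectral[OF Ac sym cpA] by blast
  have compl': "\<And>u v. u < n \<Longrightarrow> v < n \<Longrightarrow> (\<Sum>i<n. q i u * q i v) = (if u = v then 1 else 0)"
    using compl by blast
  have Mdec: "M u v = (\<Sum>i<n. poly p (\<nu> i) * q i u * q i v)" if u: "u < n" and v: "v < n" for u v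
  proof -
    have "M u v = (\<Sum>j\<le>degree p. coeff p j * (A ^\<^sub>m j) $$ (u,v))"
      unfolding M_def by (rule poly_mat_entry[OF Ac u v])
    also have "\<dots> = (\<Sum>j\<le>degree p. coeff p j * (\<Sum>i<n. \<nu> i ^ j * q i u * q i v))"
      using pow_eig[OF Ac sym e compl' u v] by simp
    also have "\<dots> = (\<Sum>j\<le>degree p. \<Sum>i<n. coeff p j * \<nu> i ^ j * q i u * q i v)"
      by (simp add: sum_distrib_left mult_ac)
    also have "\<dots> = (\<Sum>i<n. \<Sum>j\<le>degree p. coeff p j * \<nu> i ^ j * q i u * q i v)"
      by (rule sum.swap)
    also have "\<dots> = (\<Sum>i<n. poly p (\<nu> i) * q i u * q i v)"
      by (simp add: poly_altdef sum_distrib_right)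
    finally show ?thesis .
  qed
  have supp: "dist_le E k u v" if u: "u < n" and v: "v < n" and uv: "u \<noteq> v" and Mz: "M u v \<noteq> 0" for u v
  proof -
    have "(\<Sum>j\<le>degree p. coeff p j * (A ^\<^sub>m j) $$ (u,v)) \<noteq> 0"
      using Mz unfolding M_def poly_mat_entry[OF Ac u v] .
    then obtain j where j: "j \<le> degree p" "coeff p j * (A ^\<^sub>m j) $$ (u,v) \<noteq> 0"
      by (metis (no_types, lifting) atMost_iff sum.neutral)
    hence "(E ^^ j) u v" using pow_supp[OF u v] unfolding A_def by simp
    moreover have "j \<le> k" using j degk by simp
    ultimately show ?thesis unfolding dist_le_def by blast
  qed
  have exc: "\<exists>d>0. \<exists>P. quantum_kdist_coloring n E k n d P"
    using classical_col[of n E k] by blast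
  have "\<exists>d>0. \<exists>P. quantum_kdist_coloring n E k \<chi> d P"
    unfolding \<chi>_def quantum_kdist_chromatic_def by (rule LeastI_ex) (use exc in blast)
  then obtain d P where d: "d > 0" and col: "quantum_kdist_coloring n E k \<chi> d P" by blast
  have fin: "finite ((\<lambda>u. poly_mat p A $$ (u,u)) ` {0..<n})" by simp
  have dw: "w \<le> M u u" if "u < n" for u
    unfolding w_def M_def by (rule Min_le[OF fin]) (use that in auto)
  have dW: "M u u \<le> W" if "u < n" for u
    unfolding W_def M_def by (rule Max_ge[OF fin]) (use that in auto)
  have b1: "n \<le> \<chi> * card {i. i < n \<and> w \<le> poly p (\<nu> i)}"
    by (rule main_bound[OF compl' Mdec supp dw col d]) auto
  have b2: "n \<le> \<chi> * card {i. i < n \<and> - W \<le> - poly p (\<nu> i)}"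
  proof (rule main_bound[OF compl' _ _ _ col d])
    show "- M u v = (\<Sum>i<n. - poly p (\<nu> i) * q i u * q i v)" if "u < n" "v < n" for u v
      using Mdec[OF that] by (simp add: sum_negf)
    show "dist_le E k u v" if "u < n" "v < n" "u \<noteq> v" "- M u v \<noteq> 0" for u v
      using supp that by simp
    show "- W \<le> - M u u" if "u < n" for u using dW[OF that] by simp
  qed
  have m1e: "m1 = card {i. i < n \<and> w \<le> poly p (\<nu> i)}"
    unfolding m1_def using card_mset_eq[OF ms, of "\<lambda>l. w \<le> poly p l"] by simp
  have m2e: "m2 = card {i. i < n \<and> - W \<le> - poly p (\<nu> i)}"
    unfolding m2_def using card_mset_eq[OF ms, of "\<lambda>l. poly p l \<le> W"] by simp
  have nm: "n \<le> \<chi> * min m1 m2" using b1 b2 m1e m2e by (simp add: min_def)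
  have fin_ineq: "real n / real (min m1 m2) \<le> real \<chi>"
  proof (cases "min m1 m2 = 0")
    case True thus ?thesis by simp
  next
    case False
    hence pos: "real (min m1 m2) > 0" by simp
    have "real n \<le> real \<chi> * real (min m1 m2)" using nm by (metis of_nat_le_iff of_nat_mult)
    thus ?thesis using pos by (simp add: divide_le_eq)
  qed
  show ?thesis unfolding Let_def
    using fin_ineq unfolding m1_def m2_def w_def W_def A_def \<chi>_def by simp
qed

end
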